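(* Let $z\in\mathbb{R}_{\ge0}^s$ with $\sum_j z_j>0$, $\eta>0$, and indices $k,k'$ with $0<z_k<z_{k'}$. Then $\eta\frac{\partial\mathcal{H}}{\partial z_k}(z)>\eta\frac{\partial\mathcal{H}}{\partial z_{k'}}(z)$. Consequently, with $\tilde z_j=\max\big(z_j-\eta\frac{\partial\mathcal{H}}{\partial z_j}(z),0\big)$, mass order is preserved, $\tilde z_k\le\tilde z_{k'}$, and the unclipped gap widens: $\big(z_{k'}-\eta\frac{\partial\mathcal{H}}{\partial z_{k'}}(z)\big)-\big(z_k-\eta\frac{\partial\mathcal{H}}{\partial z_k}(z)\big)>z_{k'}-z_k$.
   Context: $\mathcal{H}(z)=-\sum_i \frac{z_i}{\sum_j z_j}\log\frac{z_i}{\sum_j z_j}$ with $0\log0=0$; $\frac{\partial\mathcal{H}}{\partial z_j}$ is the partial derivative (for $z_j>0$). *)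

theory Defs
  imports "HOL-Analysis.Analysis"
begin

definition xlogx :: "real \<Rightarrow> real" where
  "xlogx p = (if p = 0 then 0 else p * ln p)"

definition entropyH :: "real ^ 's \<Rightarrow> real" where
  "entropyH z = - (\<Sum>i\<in>UNIV. xlogx (z $ i / (\<Sum>j\<in>UNIV. z $ j)))"

definition partialH :: "real ^ 's \<Rightarrow> 's \<Rightarrow> real" where
  "partialH z j = deriv (\<lambda>t. entropyH (\<chi> i. if i = j then t else z $ i)) (z $ j)"

end

theory Submission
  imports Defs
begin

lemma entropy_formula:
  fixes w :: "real ^ 's"
  assumes nn: "\<And>i. w $ i \<ge> 0" and T: "(\<Sum>j\<in>UNIV. w $ j) > 0"
  shows "entropyH w = ln (\<Sum>j\<in>UNIV. w $ j) - (\<Sum>i\<in>UNIV. xlogx (w $ i)) / (\<Sum>j\<in>UNIV. w $ j)"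
proof -
  define S where "S = (\<Sum>j\<in>UNIV. w $ j)"
  have hterm: "xlogx (w $ i / S) = xlogx (w $ i) / S - w $ i * ln S / S" for i
  proof (cases "w $ i = 0")
    case True then show ?thesis by (simp add: xlogx_def)
  next
    case False
    then have "w $ i > 0" using nn[of i] by simp
    then show ?thesis using T unfolding S_def xlogx_def
      by (simp add: ln_div field_simps)
  qed
  have "(\<Sum>i\<in>UNIV. xlogx (w $ i / S)) = (\<Sum>i\<in>UNIV. xlogx (w $ i)) / S - (\<Sum>i\<in>UNIV. w $ i) * ln S / S"
    unfolding hterm by (simp add: sum_subtractf sum_divide_distrib sum_distrib_right)
  also have "\<dots> = (\<Sum>i\<in>UNIV. xlogx (w $ i)) / S - ln S" using T unfolding S_def by simp
  finally show ?thesis unfolding entropyH_def S_def by simp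
qed

lemma partial_formula:
  fixes z :: "real ^ 's"
  assumes nn: "\<And>i. z $ i \<ge> 0" and pos: "z $ j > 0"
  shows "partialH z j = ((\<Sum>i\<in>UNIV. xlogx (z $ i)) / (\<Sum>i\<in>UNIV. z $ i) - ln (z $ j)) / (\<Sum>i\<in>UNIV. z $ i)"
proof -
  define A where "A = (\<Sum>i\<in>UNIV - {j}. z $ i)"
  define B where "B = (\<Sum>i\<in>UNIV - {j}. xlogx (z $ i))"
  have A0: "A \<ge> 0" unfolding A_def by (intro sum_nonneg) (use nn in auto)
  have SA: "(\<Sum>i\<in>UNIV. z $ i) = A + z $ j"
    unfolding A_def by (simp add: sum.remove[of UNIV j] add.commute)
  have LB: "(\<Sum>i\<in>UNIV. xlogx (z $ i)) = B + z $ j * ln (z $ j)"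
    unfolding B_def using pos by (simp add: sum.remove[of UNIV j] add.commute xlogx_def)
  define f where "f t = ln (A + t) - (B + t * ln t) / (A + t)" for t
  define g where "g t = entropyH (\<chi> i. if i = j then t else z $ i)" for t
  have eq: "f t = g t" if t: "t \<in> {0<..}" for t
  proof -
    let ?w = "(\<chi> i. if i = j then t else z $ i) :: real ^ 's"
    have wn: "\<And>i. ?w $ i \<ge> 0" using nn t by auto
    have s1: "(\<Sum>i\<in>UNIV. ?w $ i) = A + t"
      unfolding A_def by (simp add: sum.remove[of UNIV j] add.commute)
    have s2: "(\<Sum>i\<in>UNIV. xlogx (?w $ i)) = B + t * ln t"
    proof -
      have "(\<Sum>i\<in>UNIV - {j}. xlogx (?w $ i)) = B"
        unfolding B_def by (rule sum.cong) auto
      moreover have "(\<Sum>i\<in>UNIV. xlogx (?w $ i)) = xlogx (?w $ j) + (\<Sum>i\<in>UNIV - {j}. xlogx (?w $ i))"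
        by (rule sum.remove) auto
      moreover have "xlogx (?w $ j) = t * ln t" using t by (simp add: xlogx_def)
      ultimately show ?thesis by simp
    qed
    show ?thesis unfolding g_def f_def
      using entropy_formula[OF wn] s1 s2 A0 t by simp
  qed
  have d: "(f has_real_derivative
     (1 / (A + z $ j) - ((ln (z $ j) + 1) * (A + z $ j) - (B + z $ j * ln (z $ j))) / (A + z $ j)^2)) (at (z $ j))"
    unfolding f_def using pos A0
    by (auto intro!: derivative_eq_intros simp: power2_eq_square field_simps)
  have "(g has_real_derivative
     (1 / (A + z $ j) - ((ln (z $ j) + 1) * (A + z $ j) - (B + z $ j * ln (z $ j))) / (A + z $ j)^2)) (at (z $ j))"
    by (rule has_field_derivative_transform_within_open[OF d, of "{0<..}"]) (use pos eq in auto)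
  then have "partialH z j = 1 / (A + z $ j) - ((ln (z $ j) + 1) * (A + z $ j) - (B + z $ j * ln (z $ j))) / (A + z $ j)^2"
    unfolding partialH_def g_def by (rule DERIV_imp_deriv)
  also have "\<dots> = ((B + z $ j * ln (z $ j)) / (A + z $ j) - ln (z $ j)) / (A + z $ j)"
  proof -
    have nz: "A + z $ j \<noteq> 0" using pos A0 by simp
    have "\<And>T l L::real. T \<noteq> 0 \<Longrightarrow> 1 / T - ((l + 1) * T - L) / T^2 = (L / T - l) / T"
      by (simp add: power2_eq_square field_simps)
    from this[OF nz] show ?thesis .
  qed
  finally show ?thesis unfolding SA LB .
qed

theorem corollary4:
  fixes z :: "real ^ 's" and \<eta> :: real and k k' :: 's
  assumes nonneg: "\<And>j. z $ j \<ge> 0"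
    and sum_pos: "(\<Sum>j\<in>UNIV. z $ j) > 0"
    and eta_pos: "\<eta> > 0"
    and zk_pos: "0 < z $ k"
    and zk_lt: "z $ k < z $ k'"
  shows "\<eta> * partialH z k > \<eta> * partialH z k'
         \<and> max (z $ k - \<eta> * partialH z k) 0 \<le> max (z $ k' - \<eta> * partialH z k') 0
         \<and> (z $ k' - \<eta> * partialH z k') - (z $ k - \<eta> * partialH z k) > z $ k' - z $ k"
proof -
  define S where "S = (\<Sum>i\<in>UNIV. z $ i)"
  define C where "C = (\<Sum>i\<in>UNIV. xlogx (z $ i)) / S"
  have pk: "partialH z k = (C - ln (z $ k)) / S"
    using partial_formula[OF nonneg zk_pos] unfolding C_def S_def .
  have pk': "partialH z k' = (C - ln (z $ k')) / S"
    using partial_formula[OF nonneg, of k'] zk_pos zk_lt unfolding C_def S_def by simp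
  have "ln (z $ k) < ln (z $ k')" using zk_pos zk_lt by simp
  then have "partialH z k > partialH z k'" unfolding pk pk'
    using sum_pos unfolding S_def by (simp add: divide_strict_right_mono)
  then have h1: "\<eta> * partialH z k > \<eta> * partialH z k'" using eta_pos by simp
  then have h3: "(z $ k' - \<eta> * partialH z k') - (z $ k - \<eta> * partialH z k) > z $ k' - z $ k" by simp
  then have "z $ k - \<eta> * partialH z k \<le> z $ k' - \<eta> * partialH z k'" using zk_lt by simp
  then have "max (z $ k - \<eta> * partialH z k) 0 \<le> max (z $ k' - \<eta> * partialH z k') 0" by simp
  with h1 h3 show ?thesis by blast
qed

end
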